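(* Let $n\ge 1$ be an integer and let $\mathbb{F}_q$ be a finite field with $q$ elements. Let $B\subset\mathbb{F}_q^n$ be a Nikodym set, i.e. for every $x\in\mathbb{F}_q^n\setminus B$ there exists a line $L\subset\mathbb{F}_q^n$ such that $L\cap(\mathbb{F}_q^n\setminus B)=\{x\}$. Then \[|B|\ge \binom{n+q-2}{n}.\]
   Context: A line in $\mathbb{F}_q^n$ is a set of the form $\{a+tb: t\in\mathbb{F}_q\}$ with $a,b\in\mathbb{F}_q^n$, $b\neq 0$. *)

theory Defs
  imports "HOL-Analysis.Analysis"
begin

definition line_of :: "'a::field ^ 'n \<Rightarrow> 'a ^ 'n \<Rightarrow> ('a ^ 'n) set" where
  "line_of a b = {a + t *s b | t. True}"

definition is_line :: "('a::field ^ 'n) set \<Rightarrow> bool" where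
  "is_line L \<longleftrightarrow> (\<exists>a b. b \<noteq> 0 \<and> L = line_of a b)"

definition nikodym_set :: "('a::field ^ 'n) set \<Rightarrow> bool" where
  "nikodym_set B \<longleftrightarrow> (\<forall>x. x \<notin> B \<longrightarrow> (\<exists>L. is_line L \<and> L \<inter> (UNIV - B) = {x}))"

end

theory Submission imports Defs "HOL-Computational_Algebra.Polynomial" begin

lemma univ_zero:
  fixes a :: "nat \<Rightarrow> 'a::{field,finite}"
  assumes "\<forall>t. (\<Sum>k<CARD('a). a k * t^k) = 0" "k < CARD('a)"
  shows "a k = 0"
proof -
  define q where "q = CARD('a)"
  have q0: "q > 0" unfolding q_def by simp
  define p where "p = (\<Sum>k<q. monom (a k) k)"
  have pe: "poly p t = (\<Sum>k<q. a k * t^k)" for t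
    unfolding p_def by (simp add: poly_sum poly_monom)
  have ck: "coeff p k = a k" using assms(2) unfolding p_def q_def
    by (simp add: coeff_sum)
  have dg: "degree p \<le> q - 1" unfolding p_def
    by (rule degree_sum_le) (auto intro: order.trans[OF degree_monom_le])
  have "p = 0"
  proof (rule ccontr)
    assume "p \<noteq> 0"
    then have "card {x. poly p x = 0} \<le> degree p" by (rule card_poly_roots_bound)
    moreover have "{x. poly p x = 0} = UNIV" using assms(1) pe q_def by auto
    ultimately show False using dg q0 q_def by simp
  qed
  then show ?thesis using ck by simp
qed

definition mon :: "('n \<Rightarrow> nat) \<Rightarrow> 'a::comm_ring_1^'n \<Rightarrow> 'a" where
  "mon e x = (\<Prod>i\<in>UNIV. x$i ^ e i)"

definition EE :: "nat \<Rightarrow> 'n set \<Rightarrow> ('n \<Rightarrow> nat) set" where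
  "EE q S = {e. (\<forall>i. e i < q) \<and> (\<forall>i. i \<notin> S \<longrightarrow> e i = 0)}"

lemma finite_EE: "finite (EE q (S::'n::finite set))"
proof -
  have "EE q S \<subseteq> PiE UNIV (\<lambda>_. {..<q})" unfolding EE_def by auto
  then show ?thesis by (rule finite_subset) (intro finite_PiE, auto)
qed

lemma mon_upd:
  assumes "e j = 0"
  shows "mon (e(j:=k)) x = x$j^k * mon e x"
proof -
  have "mon (e(j:=k)) x = x$j^k * (\<Prod>i\<in>UNIV-{j}. x$i ^ (e(j:=k)) i)"
    unfolding mon_def by (subst prod.remove[of _ j]) auto
  also have "(\<Prod>i\<in>UNIV-{j}. x$i ^ (e(j:=k)) i) = (\<Prod>i\<in>UNIV-{j}. x$i ^ e i)"
    by (rule prod.cong) auto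
  also have "\<dots> = mon e x" unfolding mon_def using assms
    by (subst prod.remove[of _ j]) auto
  finally show ?thesis .
qed

lemma mon_indep:
  assumes "e j = 0" "\<And>i. i \<noteq> j \<Longrightarrow> y$i = x$i"
  shows "mon e y = mon e x"
  unfolding mon_def using assms by (intro prod.cong) (auto, metis power_0)

lemma multi_zero:
  fixes S :: "'n::finite set"
  assumes "finite S"
  shows "\<forall>c. (\<forall>x::'a::{field,finite}^'n. (\<Sum>e\<in>EE CARD('a) S. c e * mon e x) = 0)
           \<longrightarrow> (\<forall>e\<in>EE CARD('a) S. c e = 0)"
  using assms
proof (induction S rule: finite_induct)
  case empty
  have E0: "EE CARD('a) {} = {\<lambda>_. 0}" unfolding EE_def by auto
  show ?case unfolding E0 by (simp add: mon_def)
next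
  case (insert j S)
  define q where "q = CARD('a)"
  show ?case
  proof (intro allI impI ballI)
    fix c e
    assume H: "\<forall>x::'a^'n. (\<Sum>e\<in>EE CARD('a) (insert j S). c e * mon e x) = 0"
      and e: "e \<in> EE CARD('a) (insert j S)"
    have j0: "e' j = 0" if "e' \<in> EE q S" for e' using that insert(2) unfolding EE_def by auto
    have img: "EE q (insert j S) = (\<lambda>(k,e'). e'(j:=k)) ` ({..<q} \<times> EE q S)"
    proof
      show "EE q (insert j S) \<subseteq> (\<lambda>(k,e'). e'(j:=k)) ` ({..<q} \<times> EE q S)"
      proof
        fix f assume f: "f \<in> EE q (insert j S)"
        have "f = (\<lambda>(k,e'). e'(j:=k)) (f j, f(j:=0))" by auto
        moreover have "(f j, f(j:=0)) \<in> {..<q} \<times> EE q S" using f q_def unfolding EE_def by auto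
        ultimately show "f \<in> (\<lambda>(k,e'). e'(j:=k)) ` ({..<q} \<times> EE q S)" by blast
      qed
    next
      show "(\<lambda>(k,e'). e'(j:=k)) ` ({..<q} \<times> EE q S) \<subseteq> EE q (insert j S)"
        unfolding EE_def by auto
    qed
    have inj: "inj_on (\<lambda>(k,e'). e'(j:=k)) ({..<q} \<times> EE q S)"
    proof (rule inj_onI, clarsimp)
      fix k e1 k' e2
      assume a: "k < q" "e1 \<in> EE q S" "k' < q" "e2 \<in> EE q S" "e1(j := k) = e2(j := k')"
      then have "k = k'" by (metis fun_upd_same)
      moreover have "e1 = e2"
      proof
        fix i show "e1 i = e2 i" using a j0 by (cases "i = j") (simp_all add: j0 a(2,4), metis fun_upd_other)
      qed
      ultimately show "k = k' \<and> e1 = e2" by simp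
    qed
    define G where "G k x = (\<Sum>e'\<in>EE q S. c (e'(j:=k)) * mon e' x)" for k x
    have expand: "(\<Sum>e\<in>EE q (insert j S). c e * mon e x) = (\<Sum>k<q. G k x * x$j^k)" for x :: "'a^'n"
    proof -
      have "(\<Sum>e\<in>EE q (insert j S). c e * mon e x)
          = (\<Sum>(k,e')\<in>{..<q} \<times> EE q S. c (e'(j:=k)) * mon (e'(j:=k)) x)"
        unfolding img by (subst sum.reindex[OF inj]) (simp add: case_prod_beta)
      also have "\<dots> = (\<Sum>k<q. \<Sum>e'\<in>EE q S. c (e'(j:=k)) * mon (e'(j:=k)) x)"
        by (subst sum.cartesian_product[symmetric]) simp
      also have "\<dots> = (\<Sum>k<q. G k x * x$j^k)"
        unfolding G_def sum_distrib_right
        by (intro sum.cong refl) (simp add: mon_upd j0 mult_ac)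
      finally show ?thesis .
    qed
    have Gz: "G k x = 0" if "k < q" for k x
    proof -
      have "\<forall>t. (\<Sum>k<CARD('a). G k x * t^k) = 0"
      proof
        fix t :: 'a
        define y where "y = (\<chi> i. if i = j then t else x$i)"
        have "G k y = G k x" for k unfolding G_def
          by (intro sum.cong refl arg_cong2[where f="(*)"] mon_indep) (auto simp: y_def j0)
        moreover have "y$j = t" by (simp add: y_def)
        ultimately show "(\<Sum>k<CARD('a). G k x * t^k) = 0"
          using H expand[of y] q_def by simp
      qed
      from univ_zero[OF this] that q_def show ?thesis by simp
    qed
    have IH: "\<forall>e'\<in>EE q S. c (e'(j:=k)) = 0" if "k < q" for k
      using insert(3)[rule_format, of "\<lambda>e'. c (e'(j:=k))"] Gz[OF that] unfolding G_def q_def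
      by blast
    have "e = (e(j:=0))(j := e j)" by simp
    moreover have "e(j:=0) \<in> EE q S" "e j < q" using e q_def unfolding EE_def by auto
    ultimately show "c e = 0" using IH by metis
  qed
qed

definition MM :: "nat \<Rightarrow> 'n set \<Rightarrow> ('n \<Rightarrow> nat) set" where
  "MM d S = {e. (\<forall>i. i \<notin> S \<longrightarrow> e i = 0) \<and> sum e S \<le> d}"

lemma finite_MM: "finite S \<Longrightarrow> finite (MM d (S::'n::finite set))"
proof -
  assume fS: "finite S"
  have "MM d S \<subseteq> EE (Suc d) S"
  proof
    fix e assume e: "e \<in> MM d S"
    have "e i < Suc d" for i
    proof (cases "i \<in> S")
      case True
      then have "e i \<le> sum e S" using fS by (intro member_le_sum) auto
      then show ?thesis using e unfolding MM_def by auto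
    next
      case False then show ?thesis using e unfolding MM_def by auto
    qed
    then show "e \<in> EE (Suc d) S" using e unfolding MM_def EE_def by auto
  qed
  then show ?thesis using finite_EE finite_subset by blast
qed

lemma chsum: "(\<Sum>k\<le>d. (m + (d-k)) choose m) = (Suc m + d) choose Suc m"
proof -
  have "(\<Sum>k\<le>d. (m + (d-k)) choose m) = (\<Sum>k\<le>d. (m + k) choose m)"
    by (rule sum.reindex_bij_witness[of _ "\<lambda>k. d-k" "\<lambda>k. d-k"]) auto
  also have "\<dots> = (\<Sum>k\<le>d. (m + k) choose k)"
    by (intro sum.cong refl) (metis add_diff_cancel_left' binomial_symmetric le_add1 add.commute)
  also have "\<dots> = Suc (m+d) choose d" by (rule sum_choose_lower)
  also have "\<dots> = (Suc m + d) choose Suc m"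
    by (metis add_Suc add_diff_cancel_right' binomial_symmetric le_add2)
  finally show ?thesis .
qed

lemma card_MM:
  fixes S :: "'n::finite set"
  assumes "finite S"
  shows "card (MM d S) = (card S + d) choose card S"
  using assms
proof (induction S arbitrary: d rule: finite_induct)
  case empty
  have E0: "MM d {} = {\<lambda>_. 0}" unfolding MM_def by auto
  show ?case unfolding E0 by simp
next
  case (insert j S)
  have j0: "e' j = 0" if "e' \<in> MM k S" for e' k using that insert(2) unfolding MM_def by auto
  have sm: "sum (e'(j:=k)) (insert j S) = k + sum e' S" for e' k
  proof -
    have "sum (e'(j:=k)) S = sum e' S" using insert(2) by (intro sum.cong) auto
    then show ?thesis using insert(1,2) by simp
  qed
  have img: "MM d (insert j S) = (\<lambda>(k,e'). e'(j:=k)) ` (SIGMA k:{..d}. MM (d-k) S)"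
  proof
    show "MM d (insert j S) \<subseteq> (\<lambda>(k,e'). e'(j:=k)) ` (SIGMA k:{..d}. MM (d-k) S)"
    proof
      fix f assume f: "f \<in> MM d (insert j S)"
      have "f = (\<lambda>(k,e'). e'(j:=k)) (f j, f(j:=0))" by auto
      moreover have "(f j, f(j:=0)) \<in> (SIGMA k:{..d}. MM (d-k) S)"
        using f sm[of "f(j:=0)" "f j"] unfolding MM_def by auto
      ultimately show "f \<in> (\<lambda>(k,e'). e'(j:=k)) ` (SIGMA k:{..d}. MM (d-k) S)" by blast
    qed
  next
    show "(\<lambda>(k,e'). e'(j:=k)) ` (SIGMA k:{..d}. MM (d-k) S) \<subseteq> MM d (insert j S)"
    proof
      fix x assume "x \<in> (\<lambda>(k,e'). e'(j:=k)) ` (SIGMA k:{..d}. MM (d-k) S)"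
      then obtain k e' where x: "x = e'(j:=k)" and k: "k \<le> d" and e: "e' \<in> MM (d-k) S" by auto
      have z: "\<forall>i. i \<notin> S \<longrightarrow> e' i = 0" and s: "sum e' S \<le> d - k"
        using e unfolding MM_def by auto
      have "sum (e'(j:=k)) (insert j S) = k + sum e' S" by (rule sm)
      then have "sum (e'(j:=k)) (insert j S) \<le> d" using s k by linarith
      moreover have "\<forall>i. i \<notin> insert j S \<longrightarrow> (e'(j:=k)) i = 0" using z by simp
      ultimately show "x \<in> MM d (insert j S)" unfolding MM_def x by blast
    qed
  qed
  have inj: "inj_on (\<lambda>(k,e'). e'(j:=k)) (SIGMA k:{..d}. MM (d-k) S)"
  proof (rule inj_onI)
    fix p1 p2 assume p1: "p1 \<in> (SIGMA k:{..d}. MM (d-k) S)" and p2: "p2 \<in> (SIGMA k:{..d}. MM (d-k) S)"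
      and eq: "(\<lambda>(k,e'). e'(j:=k)) p1 = (\<lambda>(k,e'). e'(j:=k)) p2"
    obtain k e1 where P1: "p1 = (k,e1)" by (cases p1)
    obtain k' e2 where P2: "p2 = (k',e2)" by (cases p2)
    have eq': "e1(j:=k) = e2(j:=k')" using eq P1 P2 by simp
    have a1: "e1 j = 0" using p1 P1 j0 by auto
    have a2: "e2 j = 0" using p2 P2 j0 by auto
    have "k = k'" using fun_cong[OF eq', of j] by simp
    moreover have "e1 = e2"
    proof
      fix i show "e1 i = e2 i"
      proof (cases "i = j")
        case True then show ?thesis using a1 a2 by simp
      next
        case False then show ?thesis using fun_cong[OF eq', of i] by simp
      qed
    qed
    ultimately show "p1 = p2" using P1 P2 by simp
  qed
  have "card (MM d (insert j S)) = card (SIGMA k:{..d}. MM (d-k) S)"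
    unfolding img by (rule card_image[OF inj])
  also have "\<dots> = (\<Sum>k\<le>d. card (MM (d-k) S))"
    using finite_MM[OF insert(1)] by simp
  also have "\<dots> = (\<Sum>k\<le>d. (card S + (d-k)) choose card S)" using insert(3) by simp
  also have "\<dots> = (Suc (card S) + d) choose Suc (card S)" by (rule chsum)
  finally show ?case using insert(1,2) by simp
qed

lemma line_poly:
  fixes a b :: "'a::field^'n" and c :: "('n \<Rightarrow> nat) \<Rightarrow> 'a"
  shows "\<exists>P. degree P \<le> d \<and> (\<forall>t. poly P t = (\<Sum>e\<in>MM d UNIV. c e * mon e (a + t *s b)))"
proof (intro exI conjI allI)
  define P where "P = (\<Sum>e\<in>MM d UNIV. smult (c e) (\<Prod>i\<in>UNIV. [:a$i, b$i:]^(e i)))"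
  show "poly P t = (\<Sum>e\<in>MM d UNIV. c e * mon e (a + t *s b))" for t
    unfolding P_def mon_def by (simp add: poly_sum poly_prod mult_ac)
  show "degree P \<le> d" unfolding P_def
  proof (rule degree_sum_le)
    show "finite (MM d (UNIV::'n set))" by (intro finite_MM) simp
  next
    fix e :: "'n \<Rightarrow> nat" assume e: "e \<in> MM d UNIV"
    have "degree (smult (c e) (\<Prod>i\<in>UNIV. [:a$i, b$i:]^(e i))) \<le> degree (\<Prod>i\<in>UNIV. [:a$i, b$i:]^(e i))"
      by (rule degree_smult_le)
    also have "\<dots> \<le> (\<Sum>i\<in>UNIV. degree ([:a$i, b$i:]^(e i)))"
      using degree_prod_sum_le[of UNIV "\<lambda>i. [:a$i, b$i:]^(e i)"] by (simp add: o_def)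
    also have "\<dots> \<le> (\<Sum>i\<in>UNIV. e i)"
    proof (rule sum_mono)
      fix i
      have "degree ([:a$i, b$i:]^(e i)) \<le> degree [:a$i, b$i:] * e i" by (rule degree_power_le)
      also have "\<dots> \<le> 1 * e i" by (intro mult_right_mono) auto
      finally show "degree ([:a$i, b$i:]^(e i)) \<le> e i" by simp
    qed
    also have "\<dots> \<le> d" using e unfolding MM_def by auto
    finally show "degree (smult (c e) (\<Prod>i\<in>UNIV. [:a$i, b$i:]^(e i))) \<le> d" .
  qed
qed

lemma smult_cancel:
  fixes b :: "'a::field^'n"
  assumes "t *s b = u *s b" "b \<noteq> 0"
  shows "t = u"
proof -
  obtain i where "b$i \<noteq> 0" using assms(2) by (metis vec_eq_iff zero_index)
  moreover have "t * b$i = u * b$i" using assms(1) by (metis vector_smult_component)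
  ultimately show ?thesis by simp
qed

theorem mainTheorem1:
  fixes B :: "('a::{field,finite} ^ 'n) set"
  assumes "nikodym_set B"
  shows "real (card B) \<ge> real ((CARD('n) + CARD('a) - 2) choose CARD('n))"
proof -
  define q where "q = CARD('a)"
  define d where "d = q - 2"
  define M where "M = MM d (UNIV::'n set)"
  define ev where "ev c x = (\<Sum>e\<in>M. c e * mon e x)" for c and x :: "'a^'n"
  have q2: "q \<ge> 2"
  proof -
    have "card {0::'a, 1} = 2" by simp
    moreover have "card {0::'a, 1} \<le> q" unfolding q_def by (rule card_mono) auto
    ultimately show ?thesis by simp
  qed
  have finM: "finite M" unfolding M_def by (rule finite_MM) simp
  have cardM: "card M = (CARD('n) + CARD('a) - 2) choose CARD('n)"
    unfolding M_def card_MM[of UNIV, simplified] using q2 unfolding d_def q_def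
    by (simp add: add.commute)
  have "card M \<le> card B"
  proof (rule ccontr)
    assume lt: "\<not> card M \<le> card B"
    define C where "C = PiE M (\<lambda>_. UNIV :: 'a set)"
    define T where "T = PiE B (\<lambda>_. UNIV :: 'a set)"
    define \<phi> where "\<phi> c = restrict (\<lambda>x. ev c x) B" for c
    have cC: "card C = q ^ card M" unfolding C_def q_def using finM by (simp add: card_PiE)
    have cT: "card T = q ^ card B" unfolding T_def q_def by (simp add: card_PiE)
    have "q ^ card B < q ^ card M" using q2 lt by (intro power_strict_increasing) auto
    then have ninj: "\<not> inj_on \<phi> C"
    proof -
      have "\<phi> ` C \<subseteq> T" unfolding \<phi>_def T_def by auto
      moreover have "finite T" by simp
      ultimately have "inj_on \<phi> C \<Longrightarrow> card C \<le> card T" by (intro card_inj_on_le) auto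
      then show ?thesis using cC cT \<open>q ^ card B < q ^ card M\<close> by auto
    qed
    then obtain c1 c2 where c12: "c1 \<in> C" "c2 \<in> C" "c1 \<noteq> c2" "\<phi> c1 = \<phi> c2"
      unfolding inj_on_def by blast
    define c where "c e = c1 e - c2 e" for e
    have cout: "c e = 0" if "e \<notin> M" for e
      using c12(1,2) that unfolding c_def C_def by (simp add: PiE_def extensional_def)
    obtain e0 where e0: "e0 \<in> M" "c e0 \<noteq> 0"
    proof -
      obtain e where "c1 e \<noteq> c2 e" using c12(3) by blast
      then have "e \<in> M" "c e \<noteq> 0" using cout unfolding c_def by force+
      then show ?thesis using that by blast
    qed
    have evc: "ev c x = ev c1 x - ev c2 x" for x
      unfolding ev_def c_def by (simp add: sum_subtractf left_diff_distrib)
    have evB: "ev c x = 0" if "x \<in> B" for x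
    proof -
      have "\<phi> c1 x = \<phi> c2 x" using c12(4) by simp
      then show ?thesis using that evc unfolding \<phi>_def by simp
    qed
    have evall: "ev c x = 0" for x
    proof (cases "x \<in> B")
      case True then show ?thesis by (rule evB)
    next
      case False
      then obtain L where L: "is_line L" "L \<inter> (UNIV - B) = {x}"
        using assms unfolding nikodym_set_def by blast
      then obtain a b where ab: "b \<noteq> 0" "L = line_of a b" unfolding is_line_def by blast
      have "x \<in> L" using L(2) by blast
      then obtain t0 where t0: "x = a + t0 *s b" using ab(2) unfolding line_of_def by blast
      obtain P where P: "degree P \<le> d" "\<And>t. poly P t = ev c (a + t *s b)"
        using line_poly[of d c a b] unfolding ev_def M_def by blast
      have roots: "UNIV - {t0} \<subseteq> {t. poly P t = 0}"
      proof
        fix t assume t: "t \<in> UNIV - {t0}"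
        have inL: "a + t *s b \<in> L" using ab(2) unfolding line_of_def by blast
        have "a + t *s b \<in> B"
        proof (rule ccontr)
          assume "a + t *s b \<notin> B"
          then have "a + t *s b = x" using inL L(2) by blast
          then have "t *s b = t0 *s b" using t0 by simp
          then show False using smult_cancel ab(1) t by blast
        qed
        then show "t \<in> {t. poly P t = 0}" using evB P(2) by simp
      qed
      have "P = 0"
      proof (rule ccontr)
        assume "P \<noteq> 0"
        then have "card {t. poly P t = 0} \<le> degree P" by (rule card_poly_roots_bound)
        moreover have "card (UNIV - {t0}) \<le> card {t. poly P t = 0}"
          using roots by (intro card_mono) auto
        moreover have "card (UNIV - {t0}) = q - 1" unfolding q_def by (simp add: card_Diff_singleton)
        ultimately show False using P(1) q2 unfolding d_def by linarith
      qed
      then show ?thesis using P(2)[of t0] t0 by simp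
    qed
    have MsubE: "M \<subseteq> EE q UNIV"
    proof
      fix e assume e: "e \<in> M"
      have "e i < q" for i
      proof -
        have "e i \<le> sum e UNIV" by (intro member_le_sum) auto
        then show ?thesis using e q2 unfolding M_def MM_def d_def by auto
      qed
      then show "e \<in> EE q UNIV" unfolding EE_def by auto
    qed
    have "\<forall>x::'a^'n. (\<Sum>e\<in>EE CARD('a) UNIV. c e * mon e x) = 0"
    proof
      fix x :: "'a^'n"
      have "(\<Sum>e\<in>EE CARD('a) UNIV. c e * mon e x) = ev c x"
        unfolding ev_def q_def[symmetric]
        by (rule sum.mono_neutral_right[OF _ MsubE]) (auto simp: cout finite_EE)
      then show "(\<Sum>e\<in>EE CARD('a) UNIV. c e * mon e x) = 0" using evall by simp
    qed
    then have "\<forall>e\<in>EE CARD('a) UNIV. c e = 0"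
      using multi_zero[of UNIV, simplified, where 'a='a] by blast
    then show False using e0 MsubE q_def by auto
  qed
  then show ?thesis using cardM by simp
qed

end
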